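(* Let $n\ge1$, let $V$ be a real symmetric positive-definite $2n\times 2n$ matrix, $\mathbf{d}\in\mathbb{R}^{2n}$, $V_0\in\mathbb{R}$, and $\mathcal{E}(\mathbf{z})=V_0+(\mathbf{z}-\mathbf{d})^TV(\mathbf{z}-\mathbf{d})$. Let $f_0:\mathbb{R}^{2n}\to[0,\infty)$ be measurable, not almost everywhere zero, with $\int f_0<\infty$ and $\int|\mathbf{z}|^2f_0(\mathbf{z})\,d^{2n}\mathbf{z}<\infty$. Define $N=\int f_0(\mathbf{z})\,d^{2n}\mathbf{z}$, $\mathbf{c}=\frac1N\int \mathbf{z}f_0(\mathbf{z})\,d^{2n}\mathbf{z}$ and $H=\int(\mathbf{z}\otimes\mathbf{z})f_0(\mathbf{z}+\mathbf{c})\,d^{2n}\mathbf{z}$. Then \[ E_{SL(2n)}:=\inf_{\mathbf{b}\in\mathbb{R}^{2n},\,A\in SL(2n)}\int \mathcal{E}(\mathbf{z})f_0(A^{-1}\mathbf{z}+\mathbf{b})\,d^{2n}\mathbf{z} \;=\; NV_0+2n\,\det(VH)^{1/(2n)}. \]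
   Context: $SL(2n)$ denotes the group of real $2n\times 2n$ matrices of determinant $1$. *)

theory Defs
  imports "HOL-Analysis.Analysis"
begin

end

theory Submission
  imports Defs
begin


lemma sym_dot: 
  fixes S :: "real^'n^'n"
  assumes "transpose S = S"
  shows "(S *v x) \<bullet> y = x \<bullet> (S *v y)"
  by (metis assms dot_lmul_matrix vector_transpose_matrix)

lemma quad_le_zero_imp:
  fixes a c :: real
  assumes a: "a \<ge> 0" and h: "\<And>t. t > 0 \<Longrightarrow> 2 * t * a + t^2 * c \<le> 0"
  shows "a = 0"
proof (rule ccontr)
  assume "a \<noteq> 0" then have ap: "a > 0" using a by simp
  define t where "t = a / (\<bar>c\<bar> + 1)"
  have tp: "t > 0" using ap by (simp add: t_def)
  have "2 * t * a + t^2 * c \<le> 0" using h tp by blast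
  then have "t * (2 * a + t * c) \<le> 0" by (simp add: power2_eq_square algebra_simps)
  then have "2 * a + t * c \<le> 0" using tp by (simp add: mult_le_0_iff)
  moreover have "t * (- \<bar>c\<bar>) \<le> t * c" by (rule mult_left_mono) (use tp in auto)
  moreover have "t * \<bar>c\<bar> < a" 
  proof -
    have "t * \<bar>c\<bar> = a * (\<bar>c\<bar> / (\<bar>c\<bar> + 1))" by (simp add: t_def)
    also have "\<dots> < a * 1" by (rule mult_strict_left_mono) (use ap in auto)
    finally show ?thesis by simp
  qed
  ultimately show False using ap by linarith
qed

lemma eigvec_exists:
  fixes S :: "real^'n^'n" and W :: "(real^'n) set"
  assumes sym: "transpose S = S" and W: "subspace W" and inv: "\<forall>x\<in>W. S *v x \<in> W"
    and ne: "\<exists>x\<in>W. x \<noteq> 0"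
  shows "\<exists>v\<in>W. norm v = 1 \<and> S *v v = (v \<bullet> (S *v v)) *\<^sub>R v"
proof -
  let ?q = "\<lambda>x. x \<bullet> (S *v x)"
  let ?K = "W \<inter> sphere 0 1"
  have cK: "compact ?K"
    by (intro closed_Int_compact closed_subspace W compact_sphere)
  moreover obtain x where x: "x \<in> W" "x \<noteq> 0" using ne by blast
  then have "x /\<^sub>R norm x \<in> ?K" using W by (auto simp: subspace_scale)
  then have neK: "?K \<noteq> {}" by blast
  have coK: "continuous_on ?K ?q"
    by (intro continuous_intros linear_continuous_on matrix_vector_mul_bounded_linear)
  obtain v where v: "v \<in> ?K" and vmax: "\<And>y. y \<in> ?K \<Longrightarrow> ?q y \<le> ?q v"
    using continuous_attains_sup[OF cK neK coK] by blast
  define M where "M = ?q v"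
  have qle: "?q y \<le> M * (norm y)^2" if "y \<in> W" for y
  proof (cases "y = 0")
    case True then show ?thesis by simp
  next
    case False
    then have "y /\<^sub>R norm y \<in> ?K" using W that by (auto simp: subspace_scale)
    then have "?q (y /\<^sub>R norm y) \<le> M" using vmax M_def by blast
    moreover have "?q (y /\<^sub>R norm y) = ?q y / (norm y)^2"
      by (simp add: matrix_vector_mult_scaleR power2_eq_square divide_inverse)
    ultimately show ?thesis using False by (simp add: divide_le_eq mult.commute)
  qed
  have vW: "v \<in> W" and nv: "norm v = 1" using v by auto
  define w where "w = S *v v - M *\<^sub>R v"
  have wW: "w \<in> W" unfolding w_def using W inv vW by (simp add: subspace_diff subspace_scale)
  have wv0: "w \<bullet> (S *v v - M *\<^sub>R v) = w \<bullet> (S *v v) - M * (w \<bullet> v)"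
    by (simp add: inner_diff_right)
  have wv: "w \<bullet> (S *v v) - M * (w \<bullet> v) = w \<bullet> w"
    using wv0 by (simp add: w_def[symmetric])
  have Svw: "(S *v w) \<bullet> v = w \<bullet> (S *v v)" using sym_dot[OF sym] .
  have vv: "v \<bullet> v = 1" using nv by (simp add: dot_square_norm)
  have "w \<bullet> w = 0"
  proof (rule quad_le_zero_imp[where c = "?q w - M * (w \<bullet> w)"])
    show "0 \<le> w \<bullet> w" by simp
    fix t :: real assume "t > 0"
    have "v + t *\<^sub>R w \<in> W" using W vW wW by (simp add: subspace_add subspace_scale)
    from qle[OF this]
    have "?q (v + t *\<^sub>R w) \<le> M * ((v + t *\<^sub>R w) \<bullet> (v + t *\<^sub>R w))"
      by (simp add: dot_square_norm)
    moreover have "?q (v + t *\<^sub>R w) = M + 2 * t * (w \<bullet> (S *v v)) + t^2 * ?q w"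
    proof -
      have "S *v (v + t *\<^sub>R w) = S *v v + t *\<^sub>R (S *v w)"
        by (simp add: matrix_vector_right_distrib matrix_vector_mult_scaleR)
      then have "?q (v + t *\<^sub>R w) = ?q v + t * (v \<bullet> (S *v w)) + t * (w \<bullet> (S *v v)) + t^2 * ?q w"
        by (simp add: inner_add_left inner_add_right power2_eq_square algebra_simps)
      moreover have "v \<bullet> (S *v w) = w \<bullet> (S *v v)" using Svw by (simp add: inner_commute)
      ultimately show ?thesis by (simp add: M_def)
    qed
    moreover have "(v + t *\<^sub>R w) \<bullet> (v + t *\<^sub>R w) = 1 + 2 * t * (w \<bullet> v) + t^2 * (w \<bullet> w)"
    proof -
      have "(v + t *\<^sub>R w) \<bullet> (v + t *\<^sub>R w) = v \<bullet> v + t * (v \<bullet> w) + t * (w \<bullet> v) + t^2 * (w \<bullet> w)"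
        by (simp add: inner_add_left inner_add_right power2_eq_square algebra_simps)
      then show ?thesis using vv by (simp add: inner_commute)
    qed
    ultimately have "M + 2 * t * (w \<bullet> (S *v v)) + t^2 * ?q w \<le> M * (1 + 2 * t * (w \<bullet> v) + t^2 * (w \<bullet> w))"
      by simp
    then have "2 * t * (w \<bullet> (S *v v) - M * (w \<bullet> v)) + t^2 * (?q w - M * (w \<bullet> w)) \<le> 0"
      by (simp add: algebra_simps)
    then show "2 * t * (w \<bullet> w) + t^2 * (?q w - M * (w \<bullet> w)) \<le> 0" using wv by simp
  qed
  then have "w = 0" by simp
  then have "S *v v = M *\<^sub>R v" unfolding w_def by simp
  then show ?thesis using vW nv M_def by blast
qed




lemma orth_eig_set:
  fixes S :: "real^'n^'n"
  assumes sym: "transpose S = S"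
  shows "subspace W \<Longrightarrow> (\<forall>x\<in>W. S *v x \<in> W) \<Longrightarrow> k \<le> dim W \<Longrightarrow>
    \<exists>B. B \<subseteq> W \<and> finite B \<and> card B = k \<and> (\<forall>u\<in>B. \<forall>v\<in>B. u \<noteq> v \<longrightarrow> u \<bullet> v = 0)
      \<and> (\<forall>v\<in>B. norm v = 1 \<and> S *v v = (v \<bullet> (S *v v)) *\<^sub>R v)"
proof (induction k arbitrary: W)
  case 0
  then show ?case by (intro exI[of _ "{}"]) auto
next
  case (Suc k)
  have "\<exists>x\<in>W. x \<noteq> 0"
  proof (rule ccontr)
    assume "\<not> ?thesis" then have "W \<subseteq> {0}" by auto
    then have "dim W = 0" by simp
    with Suc.prems(3) show False by simp
  qed
  then obtain v where vW: "v \<in> W" and nv: "norm v = 1" and ev: "S *v v = (v \<bullet> (S *v v)) *\<^sub>R v"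
    using eigvec_exists[OF sym Suc.prems(1) Suc.prems(2)] by blast
  define l where "l = v \<bullet> (S *v v)"
  define W' where "W' = W \<inter> {x. v \<bullet> x = 0}"
  have sW': "subspace W'" unfolding W'_def
    using subspace_orthogonal_to_vector[of v] Suc.prems(1) by (simp add: subspace_inter orthogonal_def)
  have iW': "\<forall>x\<in>W'. S *v x \<in> W'"
  proof
    fix x assume x: "x \<in> W'"
    have "v \<bullet> (S *v x) = (S *v v) \<bullet> x" using sym_dot[OF sym, of v x] by simp
    also have "\<dots> = l * (v \<bullet> x)"
    proof -
      have "S *v v = l *\<^sub>R v" unfolding l_def by (rule ev)
      then show ?thesis by simp
    qed
    also have "\<dots> = 0" using x W'_def by simp
    finally show "S *v x \<in> W'" using x Suc.prems(2) W'_def by auto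
  qed
  have vv: "v \<bullet> v = 1" using nv by (simp add: dot_square_norm)
  have "W \<subseteq> span (insert v W')"
  proof
    fix x assume x: "x \<in> W"
    have "x - (v \<bullet> x) *\<^sub>R v \<in> W" using x vW Suc.prems(1) by (simp add: subspace_diff subspace_scale)
    moreover have "v \<bullet> (x - (v \<bullet> x) *\<^sub>R v) = 0" using vv by (simp add: inner_diff_right)
    ultimately have "x - (v \<bullet> x) *\<^sub>R v \<in> W'" by (simp add: W'_def)
    then have "x - (v \<bullet> x) *\<^sub>R v \<in> span (insert v W')" by (simp add: span_base)
    moreover have "(v \<bullet> x) *\<^sub>R v \<in> span (insert v W')" by (simp add: span_base span_mul)
    ultimately have "(x - (v \<bullet> x) *\<^sub>R v) + (v \<bullet> x) *\<^sub>R v \<in> span (insert v W')" by (rule span_add)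
    then show "x \<in> span (insert v W')" by simp
  qed
  then have "dim W \<le> dim (span (insert v W'))" by (rule dim_subset)
  then have "dim W \<le> dim (insert v W')" by simp
  also have "\<dots> \<le> dim W' + 1" by (simp add: dim_insert)
  finally have "k \<le> dim W'" using Suc.prems(3) by simp
  then obtain B where B: "B \<subseteq> W'" "finite B" "card B = k" "\<forall>u\<in>B. \<forall>w\<in>B. u \<noteq> w \<longrightarrow> u \<bullet> w = 0"
     "\<forall>w\<in>B. norm w = 1 \<and> S *v w = (w \<bullet> (S *v w)) *\<^sub>R w"
    using Suc.IH[OF sW' iW'] by blast
  have vB: "v \<notin> B" using B(1) vv W'_def by auto
  show ?case
  proof (intro exI[of _ "insert v B"] conjI)
    show "insert v B \<subseteq> W" using B(1) vW W'_def by auto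
    show "finite (insert v B)" using B by simp
    show "card (insert v B) = Suc k" using B vB by simp
    show "\<forall>u\<in>insert v B. \<forall>w\<in>insert v B. u \<noteq> w \<longrightarrow> u \<bullet> w = 0"
    proof (intro ballI impI)
      fix a b assume a: "a \<in> insert v B" and b: "b \<in> insert v B" and ab: "a \<noteq> b"
      have vo: "v \<bullet> w = 0" "w \<bullet> v = 0" if "w \<in> B" for w
        using B(1) that W'_def by (auto simp: inner_commute)
      show "a \<bullet> b = 0"
        using a b ab vo B(4) by auto
    qed
    show "\<forall>w\<in>insert v B. norm w = 1 \<and> S *v w = (w \<bullet> (S *v w)) *\<^sub>R w"
      using B(5) nv ev by blast
  qed
qed


definition diagm :: "('n \<Rightarrow> real) \<Rightarrow> real^'n^'n" where
  "diagm l = (\<chi> i j. if i = j then l i else 0)"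

lemma spectral:
  fixes S :: "real^'n^'n"
  assumes sym: "transpose S = S"
  shows "\<exists>(U::real^'n^'n) l. transpose U ** U = mat 1 \<and> U ** transpose U = mat 1 \<and> S = U ** diagm l ** transpose U"
proof -
  have "CARD('n) \<le> dim (UNIV :: (real^'n) set)" by simp
  then have "\<exists>B. B \<subseteq> UNIV \<and> finite B \<and> card B = CARD('n) \<and> (\<forall>u\<in>B. \<forall>v\<in>B. u \<noteq> v \<longrightarrow> u \<bullet> v = 0)
      \<and> (\<forall>v\<in>B. norm v = 1 \<and> S *v v = (v \<bullet> (S *v v)) *\<^sub>R v)"
    by (intro orth_eig_set[OF sym]) (auto simp: subspace_UNIV)
  then obtain B where B: "finite B" "card B = CARD('n)" "\<forall>u\<in>B. \<forall>v\<in>B. u \<noteq> v \<longrightarrow> u \<bullet> v = 0"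
     "\<forall>v\<in>B. norm v = 1 \<and> S *v v = (v \<bullet> (S *v v)) *\<^sub>R v"
    by blast
  obtain u where u: "bij_betw u (UNIV :: 'n set) B"
  proof -
    have "\<exists>h. bij_betw h (UNIV :: 'n set) B"
      by (rule finite_same_card_bij) (use B(1,2) in simp_all)
    then show ?thesis using that by blast
  qed
  define U :: "real^'n^'n" where "U = (\<chi> i j. u j $ i)"
  define l where "l = (\<lambda>j. u j \<bullet> (S *v u j))"
  have uB: "u j \<in> B" for j using u bij_betwE by blast
  have uinj: "u i = u j \<Longrightarrow> i = j" for i j using u by (auto simp: bij_betw_def inj_on_def)
  have uu: "u i \<bullet> u j = (if i = j then 1 else 0)" for i j
  proof (cases "i = j")
    case True
    have "norm (u j) = 1" using B(4) uB[of j] by blast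
    then show ?thesis using True by (simp add: dot_square_norm)
  next
    case False
    then have "u i \<noteq> u j" using uinj by blast
    then have "u i \<bullet> u j = 0" using B(3) uB by blast
    then show ?thesis using False by simp
  qed
  have UtU: "transpose U ** U = mat 1"
  proof -
    have "(transpose U ** U) $ i $ j = u i \<bullet> u j" for i j
      by (simp add: U_def matrix_matrix_mult_def transpose_def inner_vec_def)
    then show ?thesis by (simp add: uu vec_eq_iff mat_def)
  qed
  have "orthogonal_matrix U" using UtU by (simp add: orthogonal_matrix)
  then have UUt: "U ** transpose U = mat 1" by (simp add: orthogonal_matrix_def)
  have SU: "S ** U = U ** diagm l"
  proof -
    have "(S ** U) $ i $ j = (U ** diagm l) $ i $ j" for i j
    proof -
      have "(S ** U) $ i $ j = (S *v u j) $ i"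
        by (simp add: U_def matrix_matrix_mult_def matrix_vector_mult_def)
      also have "\<dots> = l j * u j $ i"
      proof -
        have e: "S *v u j = (u j \<bullet> (S *v u j)) *\<^sub>R u j" using B(4) uB[of j] by blast
        have "(S *v u j) $ i = ((u j \<bullet> (S *v u j)) *\<^sub>R u j) $ i"
          using e by (rule arg_cong[where f="\<lambda>x. x $ i"])
        then show ?thesis by (simp add: l_def)
      qed
      also have "\<dots> = (U ** diagm l) $ i $ j"
        by (simp add: U_def diagm_def matrix_matrix_mult_def if_distrib cong: if_cong)
      finally show ?thesis .
    qed
    then show ?thesis by (simp add: vec_eq_iff)
  qed
  have "S = S ** (U ** transpose U)" by (simp add: UUt)
  also have "\<dots> = U ** diagm l ** transpose U" by (simp add: matrix_mul_assoc SU)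
  finally have "S = U ** diagm l ** transpose U" .
  with UtU UUt show ?thesis by (intro exI[of _ U] exI[of _ l]) simp
qed




lemma diagm_mult: "diagm a ** diagm b = diagm (\<lambda>i. a i * b i)"
proof -
  have "(\<Sum>k\<in>UNIV. (if i = k then a i else 0) * (if k = j then b k else 0)) = (if i = j then a i * b i else 0)"
    for i j :: 'a
  proof -
    have "(\<Sum>k\<in>UNIV. (if i = k then a i else 0) * (if k = j then b k else 0))
        = (\<Sum>k\<in>UNIV. if k = i then a i * (if i = j then b i else 0) else 0)"
      by (rule sum.cong) auto
    then show ?thesis by simp
  qed
  then show ?thesis by (simp add: diagm_def matrix_matrix_mult_def vec_eq_iff)
qed

lemma diagm_transpose: "transpose (diagm a) = diagm a"
  by (simp add: diagm_def transpose_def vec_eq_iff)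

lemma det_diagm: "det (diagm a) = prod a UNIV"
  by (subst det_diagonal) (simp_all add: diagm_def)

lemma trace_diagm: "trace (diagm a) = sum a UNIV"
  by (simp add: trace_def diagm_def)

lemma diagm_one: "diagm (\<lambda>_. 1) = mat 1"
  by (simp add: diagm_def mat_def)

lemma diag_entry:
  fixes A S :: "real^'n^'n"
  shows "(transpose A ** S ** A) $ i $ i = column i A \<bullet> (S *v column i A)"
proof -
  have "(transpose A ** S ** A) $ i $ i = ((transpose A ** S ** A) *v axis i 1) $ i"
    by (simp add: matrix_vector_mult_basis column_def)
  also have "\<dots> = (transpose A *v (S *v (A *v axis i 1))) $ i"
    by (simp add: matrix_vector_mul_assoc matrix_mul_assoc)
  also have "\<dots> = (transpose A *v (S *v column i A)) $ i"
    by (simp add: matrix_vector_mult_basis)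
  also have "\<dots> = column i A \<bullet> (S *v column i A)"
  proof -
    have "(transpose A *v y) $ i = column i A \<bullet> y" for y
      by (simp add: matrix_vector_mult_def inner_vec_def column_def transpose_def)
    then show ?thesis by blast
  qed
  finally show ?thesis .
qed

lemma spectral_psd:
  fixes S :: "real^'n^'n"
  assumes sym: "transpose S = S"
  shows "\<exists>(U::real^'n^'n) l. transpose U ** U = mat 1 \<and> U ** transpose U = mat 1 \<and> S = U ** diagm l ** transpose U
     \<and> (\<forall>i. l i = column i U \<bullet> (S *v column i U)) \<and> (\<forall>i. column i U \<bullet> column i U = 1)"
proof -
  obtain U :: "real^'n^'n" and l where UtU: "transpose U ** U = mat 1" and UUt: "U ** transpose U = mat 1"
    and S: "S = U ** diagm l ** transpose U"
    using spectral[OF sym] by blast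
  have "transpose U ** S ** U = (transpose U ** U) ** diagm l ** (transpose U ** U)"
    by (simp add: S matrix_mul_assoc)
  also have "\<dots> = diagm l" by (simp add: UtU)
  finally have D: "transpose U ** S ** U = diagm l" .
  have "l i = column i U \<bullet> (S *v column i U)" for i
    using diag_entry[of U S i] D by (simp add: diagm_def)
  moreover have "column i U \<bullet> column i U = 1" for i
  proof -
    have "transpose U ** mat 1 ** U = mat 1" using UtU by simp
    moreover have "(mat 1 :: real^'n^'n) $ i $ i = 1" by (simp add: mat_def)
    ultimately have "(transpose U ** mat 1 ** U) $ i $ i = 1" by simp
    then show ?thesis using diag_entry[of U "mat 1" i] by simp
  qed
  ultimately show ?thesis using UtU UUt S by blast
qed

lemma psd_trace_det:
  fixes S :: "real^'n^'n"
  assumes sym: "transpose S = S" and psd: "\<forall>x. x \<bullet> (S *v x) \<ge> 0"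
  shows "det S \<ge> 0 \<and> real CARD('n) * det S powr (1 / real CARD('n)) \<le> trace S"
proof -
  obtain U :: "real^'n^'n" and l where UtU: "transpose U ** U = mat 1" and UUt: "U ** transpose U = mat 1"
    and S: "S = U ** diagm l ** transpose U" and l: "\<forall>i. l i = column i U \<bullet> (S *v column i U)"
    using spectral_psd[OF sym] by blast
  have l0: "l i \<ge> 0" for i using l psd by simp
  have "trace S = trace (U ** (diagm l ** transpose U))"
    by (simp add: S matrix_mul_assoc)
  also have "\<dots> = trace ((diagm l ** transpose U) ** U)"
    by (rule trace_mul_sym)
  also have "\<dots> = trace (diagm l)" by (simp add: matrix_mul_assoc[symmetric] UtU)
  also have "\<dots> = sum l UNIV" by (simp add: trace_diagm)
  finally have tr: "trace S = sum l UNIV" .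
  have "det U * det U = 1"
    using UtU det_mul[of "transpose U" U] by simp
  then have dt: "det S = prod l UNIV"
    by (simp add: S det_mul det_diagm)
  have "(\<Sum>i\<in>UNIV. l i / real (card (UNIV::'n set))) \<ge> (\<Prod>i\<in>UNIV. l i) powr (1 / real (card (UNIV::'n set)))"
    by (rule arith_geom_mean) (auto simp: l0)
  then have "(\<Prod>i\<in>UNIV. l i) powr (1 / real CARD('n)) \<le> sum l UNIV / real CARD('n)"
    by (simp add: sum_divide_distrib)
  then have "real CARD('n) * (\<Prod>i\<in>UNIV. l i) powr (1 / real CARD('n)) \<le> sum l UNIV"
    by (simp add: field_simps)
  moreover have "det S \<ge> 0" using dt l0 by (simp add: prod_nonneg)
  ultimately show ?thesis using tr dt by simp
qed

lemma psd_factor: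
  fixes S :: "real^'n^'n"
  assumes sym: "transpose S = S" and psd: "\<forall>x. x \<bullet> (S *v x) \<ge> 0"
  shows "\<exists>R::real^'n^'n. S = transpose R ** R"
proof -
  obtain U :: "real^'n^'n" and l where UtU: "transpose U ** U = mat 1" and UUt: "U ** transpose U = mat 1"
    and S: "S = U ** diagm l ** transpose U" and l: "\<forall>i. l i = column i U \<bullet> (S *v column i U)"
    using spectral_psd[OF sym] by blast
  have l0: "l i \<ge> 0" for i using l psd by simp
  define R where "R = diagm (\<lambda>i. sqrt (l i)) ** transpose U"
  have "transpose R ** R = U ** (diagm (\<lambda>i. sqrt (l i)) ** diagm (\<lambda>i. sqrt (l i))) ** transpose U"
    by (simp add: R_def matrix_transpose_mul diagm_transpose matrix_mul_assoc)
  also have "\<dots> = S" using l0 by (simp add: diagm_mult S)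
  finally show ?thesis by metis
qed

lemma pd_normalize:
  fixes S :: "real^'n^'n"
  assumes sym: "transpose S = S" and pd: "\<forall>x. x \<noteq> 0 \<longrightarrow> x \<bullet> (S *v x) > 0"
  shows "\<exists>P::real^'n^'n. transpose P ** S ** P = mat 1"
proof -
  obtain U :: "real^'n^'n" and l where UtU: "transpose U ** U = mat 1" and UUt: "U ** transpose U = mat 1"
    and S: "S = U ** diagm l ** transpose U" and l: "\<forall>i. l i = column i U \<bullet> (S *v column i U)"
    and cc: "\<forall>i. column i U \<bullet> column i U = 1"
    using spectral_psd[OF sym] by blast
  have l0: "l i > 0" for i
  proof -
    have "column i U \<noteq> 0" using cc by (metis inner_zero_left zero_neq_one)
    then show ?thesis using l pd by simp
  qed
  define P where "P = U ** diagm (\<lambda>i. 1 / sqrt (l i))"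
  have "transpose P ** S ** P = diagm (\<lambda>i. 1 / sqrt (l i)) ** ((transpose U ** U) ** diagm l ** (transpose U ** U)) ** diagm (\<lambda>i. 1 / sqrt (l i))"
    by (simp add: P_def S matrix_transpose_mul diagm_transpose matrix_mul_assoc)
  also have "\<dots> = diagm (\<lambda>i. 1 / sqrt (l i) * (l i * (1 / sqrt (l i))))"
    by (simp add: UtU diagm_mult)
  also have "\<dots> = mat 1"
  proof -
    have "1 / sqrt (l i) * (l i * (1 / sqrt (l i))) = 1" for i
      using l0[of i] by (simp add: field_simps)
    then show ?thesis by (simp add: diagm_one[symmetric])
  qed
  finally show ?thesis by blast
qed




lemma dot_transpose: "(x::real^'n) \<bullet> (M *v y) = (transpose M *v x) \<bullet> y"
  by (metis dot_lmul_matrix transpose_transpose vector_transpose_matrix)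

lemma transpose_scaleR: "transpose (c *\<^sub>R (M::real^'n^'m)) = c *\<^sub>R transpose M"
  by (simp add: transpose_def vec_eq_iff)

lemma trace_scaleR: "trace (c *\<^sub>R (M::real^'n^'n)) = c * trace M"
  by (simp add: trace_def sum_distrib_left)

lemma scaleR_mm_left: "(c *\<^sub>R (X::real^'n^'m)) ** (Y::real^'k^'n) = c *\<^sub>R (X ** Y)"
  by (simp add: scalar_matrix_assoc)

lemma scaleR_mm_right: "(X::real^'n^'m) ** (c *\<^sub>R (Y::real^'k^'n)) = c *\<^sub>R (X ** Y)"
  by (simp add: matrix_scalar_ac scalar_matrix_assoc)

lemma diagm_mm: "diagm a ** (M::real^'k^'n) = (\<chi> i j. a i * M $ i $ j)"
proof -
  have "(\<Sum>k\<in>UNIV. (if i = k then a i else 0) * M $ k $ j) = a i * M $ i $ j" for i j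
  proof -
    have "(\<Sum>k\<in>UNIV. (if i = k then a i else 0) * M $ k $ j) = (\<Sum>k\<in>UNIV. if k = i then a i * M $ i $ j else 0)"
      by (rule sum.cong) auto
    then show ?thesis by simp
  qed
  then show ?thesis by (simp add: diagm_def matrix_matrix_mult_def vec_eq_iff)
qed

lemma det_scaleR: "det (c *\<^sub>R (M::real^'n^'n)) = c ^ CARD('n) * det M"
proof -
  have "c *\<^sub>R M = diagm (\<lambda>_. c) ** M" by (simp add: diagm_mm vec_eq_iff)
  then show ?thesis by (simp add: det_mul det_diagm)
qed

lemma trace_lb:
  fixes V H A :: "real^'n^'n"
  assumes Vsym: "transpose V = V" and Vpsd: "\<forall>x. x \<bullet> (V *v x) \<ge> 0"
    and Hsym: "transpose H = H" and Hpsd: "\<forall>x. x \<bullet> (H *v x) \<ge> 0"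
    and detA: "det A = 1"
  shows "real CARD('n) * (det V * det H) powr (1 / real CARD('n)) \<le> trace (transpose A ** V ** A ** H)"
proof -
  obtain R :: "real^'n^'n" where H: "H = transpose R ** R" using psd_factor[OF Hsym Hpsd] by blast
  define S where "S = R ** transpose A ** V ** A ** transpose R"
  have "trace (transpose A ** V ** A ** H) = trace ((transpose A ** V ** A ** transpose R) ** R)"
    by (simp add: H matrix_mul_assoc)
  also have "\<dots> = trace (R ** (transpose A ** V ** A ** transpose R))" by (rule trace_mul_sym)
  also have "\<dots> = trace S" by (simp add: S_def matrix_mul_assoc)
  finally have tr: "trace (transpose A ** V ** A ** H) = trace S" .
  have Ssym: "transpose S = S"
    by (simp add: S_def matrix_transpose_mul matrix_mul_assoc Vsym)
  have Spsd: "\<forall>x. x \<bullet> (S *v x) \<ge> 0"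
  proof
    fix x :: "real^'n"
    define w where "w = A *v (transpose R *v x)"
    have "S *v x = R *v (transpose A *v (V *v w))"
      by (simp only: S_def w_def matrix_vector_mul_assoc matrix_mul_assoc)
    then have "x \<bullet> (S *v x) = (transpose R *v x) \<bullet> (transpose A *v (V *v w))"
      using dot_transpose[of x R] by simp
    also have "\<dots> = w \<bullet> (V *v w)"
      using dot_transpose[of "transpose R *v x" "transpose A" "V *v w"] w_def by (simp only: transpose_transpose)
    finally have "x \<bullet> (S *v x) = w \<bullet> (V *v w)" .
    then show "x \<bullet> (S *v x) \<ge> 0" using Vpsd by simp
  qed
  have dS: "det S = det V * det H"
    by (simp add: S_def H det_mul detA)
  show ?thesis using psd_trace_det[OF Ssym Spsd] tr dS by simp
qed




lemma trace_att:
  fixes V H :: "real^'n^'n"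
  assumes Vsym: "transpose V = V" and Vpd: "\<forall>x. x \<noteq> 0 \<longrightarrow> x \<bullet> (V *v x) > 0"
    and Hsym: "transpose H = H" and Hpd: "\<forall>x. x \<noteq> 0 \<longrightarrow> x \<bullet> (H *v x) > 0"
  shows "\<exists>A::real^'n^'n. det A = 1 \<and>
     trace (transpose A ** V ** A ** H) = real CARD('n) * (det V * det H) powr (1 / real CARD('n))"
proof -
  let ?m = "real CARD('n)"
  have m0: "?m > 0" by simp
  obtain P :: "real^'n^'n" where P: "transpose P ** V ** P = mat 1" using pd_normalize[OF Vsym Vpd] by blast
  obtain Q :: "real^'n^'n" where Q: "transpose Q ** H ** Q = mat 1" using pd_normalize[OF Hsym Hpd] by blast
  define p where "p = det P"
  define q where "q = det Q"
  have pV: "p * p * det V = 1" using arg_cong[OF P, of det] by (simp add: det_mul p_def mult_ac)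
  have qH: "q * q * det H = 1" using arg_cong[OF Q, of det] by (simp add: det_mul q_def mult_ac)
  have pq0: "p * q \<noteq> 0" using pV qH by auto
  obtain Om :: "real^'n^'n" where OO: "transpose Om ** Om = mat 1" and dO: "det Om * (p * q) = \<bar>p * q\<bar>"
  proof (cases "p * q > 0")
    case True
    show ?thesis by (rule that[of "mat 1"]) (use True in auto)
  next
    case False
    define i0 :: 'n where "i0 = undefined"
    define f :: "'n \<Rightarrow> real" where "f = (\<lambda>i. if i = i0 then -1 else 1)"
    have "transpose (diagm f) ** diagm f = mat 1"
    proof -
      have "(\<lambda>i. f i * f i) = (\<lambda>_. 1)" by (auto simp: f_def)
      then show ?thesis by (simp add: diagm_transpose diagm_mult diagm_one)
    qed
    moreover have "det (diagm f) = -1"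
      by (simp add: det_diagm f_def)
    ultimately show ?thesis using False pq0 by (intro that[of "diagm f"]) auto
  qed
  define \<mu> where "\<mu> = \<bar>p * q\<bar> powr (- 1 / ?m)"
  have mu0: "\<mu> > 0" using pq0 by (simp add: \<mu>_def)
  have mupow: "\<mu> ^ CARD('n) = 1 / \<bar>p * q\<bar>"
  proof -
    have "\<mu> ^ CARD('n) = \<bar>p * q\<bar> powr (?m * (- 1 / ?m))"
      unfolding \<mu>_def using pq0 by (subst powr_power) auto
    also have "\<dots> = \<bar>p * q\<bar> powr (- 1)" using m0 by simp
    also have "\<dots> = 1 / \<bar>p * q\<bar>" by simp
    finally show ?thesis .
  qed
  define A where "A = \<mu> *\<^sub>R (P ** Om ** transpose Q)"
  have detA: "det A = 1"
  proof -
    have "det A = \<mu> ^ CARD('n) * (det Om * (p * q))"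
      by (simp add: A_def det_scaleR det_mul p_def q_def algebra_simps)
    then show ?thesis using dO mupow pq0 by simp
  qed
  have PVP: "transpose P ** (V ** (P ** X)) = X" for X :: "real^'n^'n"
    using P by (simp add: matrix_mul_assoc)
  have OOX: "transpose Om ** (Om ** X) = X" for X :: "real^'n^'n"
    using OO by (simp add: matrix_mul_assoc)
  have "transpose A ** V ** A ** H = (\<mu> * \<mu>) *\<^sub>R (Q ** (transpose Om ** (transpose P ** (V ** (P ** (Om ** (transpose Q ** H)))))))"
    by (simp add: A_def transpose_scaleR matrix_transpose_mul scaleR_mm_left scaleR_mm_right matrix_mul_assoc)
  also have "\<dots> = (\<mu> * \<mu>) *\<^sub>R (Q ** (transpose Q ** H))"
    by (simp add: PVP OOX)
  finally have eq: "transpose A ** V ** A ** H = (\<mu> * \<mu>) *\<^sub>R (Q ** (transpose Q ** H))" .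
  have "trace (Q ** (transpose Q ** H)) = trace ((transpose Q ** H) ** Q)" by (rule trace_mul_sym)
  also have "\<dots> = ?m" using Q by (simp add: trace_I)
  finally have trQ: "trace (Q ** (transpose Q ** H)) = ?m" .
  have "det V * det H = \<bar>p * q\<bar> powr (-2)"
  proof -
    have "det V * det H = 1 / (\<bar>p * q\<bar> * \<bar>p * q\<bar>)"
    proof -
      have "det V = 1 / (p * p)" using pV pq0 by (simp add: field_simps)
      moreover have "det H = 1 / (q * q)" using qH pq0 by (simp add: field_simps)
      moreover have "\<bar>p * q\<bar> * \<bar>p * q\<bar> = (p * p) * (q * q)" by (simp add: abs_mult_self_eq mult_ac)
      ultimately show ?thesis by simp
    qed
    also have "\<dots> = \<bar>p * q\<bar> powr (-2)"
      using pq0 by (simp add: powr_minus_divide powr_realpow[symmetric] power2_eq_square)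
    finally show ?thesis .
  qed
  then have "(det V * det H) powr (1 / ?m) = \<mu> * \<mu>"
    unfolding \<mu>_def by (simp add: powr_powr powr_add[symmetric])
  then show ?thesis using eq trQ detA by (intro exI[of _ A]) (simp add: trace_scaleR)
qed




lemma det_shear_matrix:
  fixes m n :: "'n::finite"
  assumes "m \<noteq> n"
  shows "det (matrix (\<lambda>v::real^'n. \<chi> i. if i = m then v $ m + v $ n else v $ i)) = 1"
proof -
  have "matrix (\<lambda>v::real^'n. \<chi> i. if i = m then v $ m + v $ n else v $ i)
      = (\<chi> k. if k = m then row m (mat 1) + 1 *s row n (mat 1) else row k (mat 1 :: real^'n^'n))"
    by (simp add: matrix_def vec_eq_iff row_def mat_def axis_def)
  then show ?thesis using det_row_operation[OF assms, of "mat 1 :: real^'n^'n" 1] by simp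
qed

proposition
 fixes f :: "real^'n \<Rightarrow> real^'n"
  assumes "linear f" "S \<in> lmeasurable"
  shows measurable_linear_image': "(f ` S) \<in> lmeasurable"
    and measure_linear_image': "measure lebesgue (f ` S) = \<bar>det (matrix f)\<bar> * measure lebesgue S" (is "?Q f S")
proof -
  have "\<forall>S \<in> lmeasurable. (f ` S) \<in> lmeasurable \<and> ?Q f S"
  proof (rule induct_linear_elementary [OF \<open>linear f\<close>]; intro ballI)
    fix f g and S :: "(real,'n) vec set"
    assume "linear f" and "linear g"
      and f [rule_format]: "\<forall>S \<in> lmeasurable. f ` S \<in> lmeasurable \<and> ?Q f S"
      and g [rule_format]: "\<forall>S \<in> lmeasurable. g ` S \<in> lmeasurable \<and> ?Q g S"
      and S: "S \<in> lmeasurable"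
    then have gS: "g ` S \<in> lmeasurable"
      by blast
    show "(f \<circ> g) ` S \<in> lmeasurable \<and> ?Q (f \<circ> g) S"
      using f [OF gS] g [OF S] matrix_compose [OF \<open>linear g\<close> \<open>linear f\<close>]
      by (simp add: o_def image_comp abs_mult det_mul)
  next
    fix f :: "real^'n \<Rightarrow> real^'n" and i and S :: "(real^'n) set"
    assume "linear f" and 0: "\<And>x. f x $ i = 0" and "S \<in> lmeasurable"
    then have "\<not> inj f"
      by (metis (full_types) linear_injective_imp_surjective one_neq_zero surjE vec_component)
    have detf: "det (matrix f) = 0"
      using \<open>\<not> inj f\<close> det_nz_iff_inj[OF \<open>linear f\<close>] by blast
    show "f ` S \<in> lmeasurable \<and> ?Q f S"
    proof
      show "f ` S \<in> lmeasurable"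
        using lmeasurable_iff_indicator_has_integral \<open>linear f\<close> \<open>\<not> inj f\<close> negligible_UNIV negligible_linear_singular_image by blast
      have "measure lebesgue (f ` S) = 0"
        by (meson \<open>\<not> inj f\<close> \<open>linear f\<close> negligible_imp_measure0 negligible_linear_singular_image)
      also have "\<dots> = \<bar>det (matrix f)\<bar> * measure lebesgue S"
        by (simp add: detf)
      finally show "?Q f S" .
    qed
  next
    fix c and S :: "(real^'n) set"
    assume "S \<in> lmeasurable"
    show "(\<lambda>a. \<chi> i. c i * a $ i) ` S \<in> lmeasurable \<and> ?Q (\<lambda>a. \<chi> i. c i * a $ i) S"
    proof
      show "(\<lambda>a. \<chi> i. c i * a $ i) ` S \<in> lmeasurable"
        by (simp add: \<open>S \<in> lmeasurable\<close> measurable_stretch)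
      show "?Q (\<lambda>a. \<chi> i. c i * a $ i) S"
        by (simp add: measure_stretch [OF \<open>S \<in> lmeasurable\<close>, of c] axis_def matrix_def det_diagonal)
    qed
  next
    fix m :: "'n" and n :: "'n" and S :: "(real, 'n) vec set"
    assume "m \<noteq> n" and "S \<in> lmeasurable"
    let ?h = "\<lambda>v::(real, 'n) vec. \<chi> i. v $ Transposition.transpose m n i"
    have lin: "linear ?h"
      by (rule linearI) (simp_all add: plus_vec_def scaleR_vec_def)
    have meq: "measure lebesgue ((\<lambda>v::(real, 'n) vec. \<chi> i. v $ Transposition.transpose m n i) ` cbox a b)
             = measure lebesgue (cbox a b)" for a b
    proof (cases "cbox a b = {}")
      case True then show ?thesis
        by simp
    next
      case False
      then have him: "?h ` (cbox a b) \<noteq> {}"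
        by blast
      have eq: "?h ` (cbox a b) = cbox (?h a) (?h b)"
        by (auto simp: image_iff lambda_swap_Galois mem_box_cart) (metis transpose_involutory)+
      show ?thesis
        using him prod.permute [OF permutes_swap_id, where S=UNIV and g="\<lambda>i. (b - a)$i", symmetric]
        by (simp add: eq content_cbox_cart False)
    qed
    have "(\<chi> i j. if Transposition.transpose m n i = j then 1 else 0) = (\<chi> i j. if j = Transposition.transpose m n i then 1 else (0::real))"
      by (auto intro!: Cart_lambda_cong)
    then have "matrix ?h = transpose(\<chi> i j. mat 1 $ i $ Transposition.transpose m n j)"
      by (auto simp: matrix_eq transpose_def axis_def mat_def matrix_def)
    then have 1: "\<bar>det (matrix ?h)\<bar> = 1"
      by (simp add: det_permute_columns permutes_swap_id sign_swap_id abs_mult)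
    show "?h ` S \<in> lmeasurable \<and> ?Q ?h S"
      using measure_linear_sufficient [OF lin \<open>S \<in> lmeasurable\<close>] meq 1 by force
  next
    fix m n :: "'n" and S :: "(real, 'n) vec set"
    assume "m \<noteq> n" and "S \<in> lmeasurable"
    let ?h = "\<lambda>v::(real, 'n) vec. \<chi> i. if i = m then v $ m + v $ n else v $ i"
    have lin: "linear ?h"
      by (rule linearI) (auto simp: algebra_simps plus_vec_def scaleR_vec_def vec_eq_iff)
    have 1: "det(matrix ?h) = 1"
      using det_shear_matrix[OF \<open>m \<noteq> n\<close>] .
    have meq: "measure lebesgue (?h ` (cbox a b)) = measure lebesgue (cbox a b)" for a b
    proof (cases "cbox a b = {}")
      case True then show ?thesis by simp
    next
      case False
      then have ne: "(+) (\<chi> i. if i = n then - a $ n else 0) ` cbox a b \<noteq> {}"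
        by auto
      let ?v = "\<chi> i. if i = n then - a $ n else 0"
      have "?h ` cbox a b
            = (+) (\<chi> i. if i = m \<or> i = n then a $ n else 0) ` ?h ` (+) ?v ` (cbox a b)"
        using \<open>m \<noteq> n\<close> unfolding image_comp o_def by (force simp: vec_eq_iff)
      then have "measure lebesgue (?h ` (cbox a b))
               = measure lebesgue ((\<lambda>v. \<chi> i. if i = m then v $ m + v $ n else v $ i) `
                                   (+) ?v ` cbox a b)"
        by (rule ssubst) (rule measure_translation)
      also have "\<dots> = measure lebesgue ((\<lambda>v. \<chi> i. if i = m then v $ m + v $ n else v $ i) ` cbox (?v +a) (?v + b))"
        by (metis (no_types, lifting) cbox_translation)
      also have "\<dots> = measure lebesgue ((+) ?v ` cbox a b)"
        apply (subst measure_shear_interval)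
        using \<open>m \<noteq> n\<close> ne apply auto
        apply (simp add: cbox_translation)
        by (metis cbox_borel cbox_translation measure_completion sets_lborel)
      also have "\<dots> = measure lebesgue (cbox a b)"
        by (rule measure_translation)
        finally show ?thesis .
      qed
    show "?h ` S \<in> lmeasurable \<and> ?Q ?h S"
      using measure_linear_sufficient [OF lin \<open>S \<in> lmeasurable\<close>] meq 1 by force
  qed
  with assms show "(f ` S) \<in> lmeasurable" "?Q f S"
    by metis+
qed




lemma matrix_inv_props:
  fixes A :: "real^'n^'n"
  assumes "det A \<noteq> 0"
  shows "A ** matrix_inv A = mat 1" "matrix_inv A ** A = mat 1"
proof -
  have "invertible A" using assms invertible_det_nz by blast
  then have "\<exists>A'. A ** A' = mat 1 \<and> A' ** A = mat 1" unfolding invertible_def by blast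
  then have "A ** matrix_inv A = mat 1 \<and> matrix_inv A ** A = mat 1"
    unfolding matrix_inv_def by (rule someI_ex)
  then show "A ** matrix_inv A = mat 1" "matrix_inv A ** A = mat 1" by auto
qed

lemma affine_image_lmeasurable:
  fixes A :: "real^'n^'n"
  assumes dA: "\<bar>det A\<bar> = 1" and S: "S \<in> lmeasurable"
  shows "(\<lambda>x. A *v x + t) ` S \<in> lmeasurable \<and> measure lebesgue ((\<lambda>x. A *v x + t) ` S) = measure lebesgue S"
proof -
  have eq: "(\<lambda>x. A *v x + t) ` S = (+) t ` ((\<lambda>x. A *v x) ` S)"
    by (auto simp: image_iff add.commute)
  have lin: "linear (\<lambda>x. A *v x)" by simp
  have 1: "(\<lambda>x. A *v x) ` S \<in> lmeasurable" using measurable_linear_image'[OF lin S] .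
  have 2: "measure lebesgue ((\<lambda>x. A *v x) ` S) = measure lebesgue S"
    using measure_linear_image'[OF lin S] dA by simp
  show ?thesis unfolding eq using measurable_translation[OF 1] measure_translation 2 by metis
qed

lemma image_sets_lebesgue:
  fixes \<phi> :: "'a::euclidean_space \<Rightarrow> 'a"
  assumes P: "\<And>S. S \<in> lmeasurable \<Longrightarrow> \<phi> ` S \<in> lmeasurable \<and> measure lebesgue (\<phi> ` S) = measure lebesgue S"
    and S: "S \<in> sets lebesgue"
  shows "\<phi> ` S \<in> sets lebesgue \<and> emeasure lebesgue (\<phi> ` S) = emeasure lebesgue S"
proof -
  define Sk where "Sk = (\<lambda>k::nat. S \<inter> cball 0 (real k))"
  have Skm: "Sk k \<in> lmeasurable" for k
    unfolding Sk_def by (rule fmeasurableI2[OF lmeasurable_cball]) (use S in auto)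
  have SU: "S = (\<Union>k. Sk k)"
  proof
    show "S \<subseteq> (\<Union>k. Sk k)"
    proof
      fix x assume "x \<in> S"
      obtain k :: nat where "norm x \<le> real k" using real_arch_simple by blast
      then show "x \<in> (\<Union>k. Sk k)" using \<open>x \<in> S\<close> by (auto simp: Sk_def)
    qed
  qed (auto simp: Sk_def)
  have inc: "incseq Sk"
    by (auto simp: incseq_def Sk_def) 
  have inc2: "incseq (\<lambda>k. \<phi> ` Sk k)"
    using inc by (auto simp: incseq_def image_mono)
  have phiU: "\<phi> ` S = (\<Union>k. \<phi> ` Sk k)" by (subst SU) blast
  have sets2: "range (\<lambda>k. \<phi> ` Sk k) \<subseteq> sets lebesgue" using P Skm by (auto simp: fmeasurable_def)
  have sets1: "range Sk \<subseteq> sets lebesgue" using Skm by (auto simp: fmeasurable_def)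
  have "\<phi> ` S \<in> sets lebesgue" unfolding phiU using sets2 by blast
  moreover have "emeasure lebesgue (\<phi> ` S) = emeasure lebesgue S"
  proof -
    have "emeasure lebesgue (\<phi> ` S) = (SUP k. emeasure lebesgue (\<phi> ` Sk k))"
      unfolding phiU using SUP_emeasure_incseq[OF sets2 inc2] by simp
    also have "\<dots> = (SUP k. emeasure lebesgue (Sk k))"
      using P Skm by (simp add: emeasure_eq_measure2)
    also have "\<dots> = emeasure lebesgue S"
      using SUP_emeasure_incseq[OF sets1 inc] SU by simp
    finally show ?thesis .
  qed
  ultimately show ?thesis by blast
qed

lemma distr_lebesgue_bij:
  fixes \<phi> \<psi> :: "'a::euclidean_space \<Rightarrow> 'a"
  assumes inv1: "\<And>x. \<psi> (\<phi> x) = x" and inv2: "\<And>y. \<phi> (\<psi> y) = y"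
    and P\<phi>: "\<And>S. S \<in> lmeasurable \<Longrightarrow> \<phi> ` S \<in> lmeasurable \<and> measure lebesgue (\<phi> ` S) = measure lebesgue S"
    and P\<psi>: "\<And>S. S \<in> lmeasurable \<Longrightarrow> \<psi> ` S \<in> lmeasurable \<and> measure lebesgue (\<psi> ` S) = measure lebesgue S"
  shows "\<phi> \<in> lebesgue \<rightarrow>\<^sub>M lebesgue" "distr lebesgue lebesgue \<phi> = lebesgue"
proof -
  have pre: "\<phi> -` A \<inter> space lebesgue = \<psi> ` A" for A
  proof -
    have "\<phi> -` A = \<psi> ` A"
    proof
      show "\<phi> -` A \<subseteq> \<psi> ` A" using inv1 by (metis image_eqI subsetI vimageE)
      show "\<psi> ` A \<subseteq> \<phi> -` A" using inv2 by auto
    qed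
    then show ?thesis by simp
  qed
  show meas: "\<phi> \<in> lebesgue \<rightarrow>\<^sub>M lebesgue"
  proof (rule measurableI)
    fix A :: "'a set" assume "A \<in> sets lebesgue"
    then show "\<phi> -` A \<inter> space lebesgue \<in> sets lebesgue"
      unfolding pre using image_sets_lebesgue[OF P\<psi>] by blast
  qed simp
  show "distr lebesgue lebesgue \<phi> = lebesgue"
  proof (rule measure_eqI)
    show "sets (distr lebesgue lebesgue \<phi>) = sets lebesgue" by simp
    fix A assume "A \<in> sets (distr lebesgue lebesgue \<phi>)"
    then have A: "A \<in> sets lebesgue" by simp
    have "emeasure (distr lebesgue lebesgue \<phi>) A = emeasure lebesgue (\<phi> -` A \<inter> space lebesgue)"
      by (rule emeasure_distr[OF meas A])
    also have "\<dots> = emeasure lebesgue A"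
      unfolding pre using image_sets_lebesgue[OF P\<psi> A] by blast
    finally show "emeasure (distr lebesgue lebesgue \<phi>) A = emeasure lebesgue A" .
  qed
qed

lemma affine_distr:
  fixes A :: "real^'n^'n"
  assumes dA: "\<bar>det A\<bar> = 1"
  shows "(\<lambda>x. A *v x + t) \<in> lebesgue \<rightarrow>\<^sub>M lebesgue" "distr lebesgue lebesgue (\<lambda>x. A *v x + t) = lebesgue"
proof -
  define B where "B = matrix_inv A"
  have d0: "det A \<noteq> 0" using dA by auto
  have AB: "A ** B = mat 1" and BA: "B ** A = mat 1" using matrix_inv_props[OF d0] by (auto simp: B_def)
  have "det B * det A = 1" using arg_cong[OF BA, of det] by (simp add: det_mul)
  then have "\<bar>det B\<bar> * \<bar>det A\<bar> = 1" by (simp add: abs_mult[symmetric])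
  then have dB: "\<bar>det B\<bar> = 1" using dA by simp
  have inv1: "B *v (A *v x + t) + - (B *v t) = x" for x
    by (simp add: matrix_vector_right_distrib matrix_vector_mul_assoc BA)
  have inv2: "A *v (B *v y + - (B *v t)) + t = y" for y
    by (simp add: matrix_vector_right_distrib matrix_vector_mul_assoc AB matrix_vector_mult_diff_distrib)
  note D = distr_lebesgue_bij[where \<phi>="\<lambda>x. A *v x + t" and \<psi>="\<lambda>y. B *v y + - (B *v t)", OF inv1 inv2
        affine_image_lmeasurable[OF dA] affine_image_lmeasurable[OF dB]]
  show "(\<lambda>x. A *v x + t) \<in> lebesgue \<rightarrow>\<^sub>M lebesgue" by (rule D(1))
  show "distr lebesgue lebesgue (\<lambda>x. A *v x + t) = lebesgue" by (rule D(2))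
qed

lemma affine_integral:
  fixes A :: "real^'n^'n" and F :: "real^'n \<Rightarrow> real"
  assumes dA: "\<bar>det A\<bar> = 1" and F: "F \<in> borel_measurable lebesgue"
  shows "integral\<^sup>L lebesgue (\<lambda>x. F (A *v x + t)) = integral\<^sup>L lebesgue F"
    and "integrable lebesgue (\<lambda>x. F (A *v x + t)) \<longleftrightarrow> integrable lebesgue F"
proof -
  note m = affine_distr[OF dA, of t]
  show "integral\<^sup>L lebesgue (\<lambda>x. F (A *v x + t)) = integral\<^sup>L lebesgue F"
    using integral_distr[OF m(1) F] m(2) by simp
  show "integrable lebesgue (\<lambda>x. F (A *v x + t)) \<longleftrightarrow> integrable lebesgue F"
    using integrable_distr_eq[OF m(1) F] m(2) by simp
qed




lemma cont_meas_lebesgue: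
  fixes f :: "'a::euclidean_space \<Rightarrow> 'b::euclidean_space"
  assumes "continuous_on UNIV f"
  shows "f \<in> borel_measurable lebesgue"
proof -
  have "f \<in> borel_measurable borel" using assms by (rule borel_measurable_continuous_onI)
  then have "f \<in> borel_measurable lborel" by (simp cong: measurable_cong_sets)
  then show ?thesis by (rule measurable_completion)
qed

lemma cont_mv[continuous_intros]:
  "continuous_on S f \<Longrightarrow> continuous_on S (\<lambda>x. (V::real^'n^'m) *v f x)"
  by (rule bounded_linear.continuous_on[OF matrix_vector_mul_bounded_linear])

lemma nth_meas: "(\<lambda>z::real^'m. z $ i) \<in> borel_measurable lebesgue"
  by (intro cont_meas_lebesgue continuous_intros)

lemma moments:
  fixes f0 :: "real^'m \<Rightarrow> real"
  assumes fm: "f0 \<in> borel_measurable lebesgue" and nn: "\<And>z. f0 z \<ge> 0"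
    and fi: "integrable lebesgue f0" and f2: "integrable lebesgue (\<lambda>z. (norm z)^2 * f0 z)"
  shows "integrable lebesgue (\<lambda>z. z $ i * f0 z)"
    and "integrable lebesgue (\<lambda>z. z $ i * z $ j * f0 z)"
    and "integrable lebesgue (\<lambda>z. f0 z *\<^sub>R z)"
proof -
  have b: "integrable lebesgue (\<lambda>z. f0 z + (norm z)^2 * f0 z)" using fi f2 by simp
  have n1: "norm z \<le> 1 + (norm z)^2" for z :: "real^'m"
  proof -
    have "0 \<le> (norm z - 1)^2" by simp
    then have "2 * norm z \<le> 1 + (norm z)^2" by (simp add: power2_eq_square algebra_simps)
    then show ?thesis using norm_ge_zero[of z] by linarith
  qed
  show "integrable lebesgue (\<lambda>z. z $ i * f0 z)"
  proof (rule Bochner_Integration.integrable_bound[OF b])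
    show "(\<lambda>z. z $ i * f0 z) \<in> borel_measurable lebesgue"
      by (intro borel_measurable_times nth_meas fm)
    show "AE z in lebesgue. norm (z $ i * f0 z) \<le> norm (f0 z + (norm z)^2 * f0 z)"
    proof (rule AE_I2)
      fix z :: "real^'m"
      have "\<bar>z $ i\<bar> * f0 z \<le> (1 + (norm z)^2) * f0 z"
        using component_le_norm_cart[of z i] n1[of z] nn[of z] by (intro mult_right_mono) auto
      then show "norm (z $ i * f0 z) \<le> norm (f0 z + (norm z)^2 * f0 z)"
        using nn[of z] by (simp add: abs_mult algebra_simps)
    qed
  qed
  show "integrable lebesgue (\<lambda>z. z $ i * z $ j * f0 z)"
  proof (rule Bochner_Integration.integrable_bound[OF f2])
    show "(\<lambda>z. z $ i * z $ j * f0 z) \<in> borel_measurable lebesgue"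
      by (intro borel_measurable_times nth_meas fm)
    show "AE z in lebesgue. norm (z $ i * z $ j * f0 z) \<le> norm ((norm z)^2 * f0 z)"
    proof (rule AE_I2)
      fix z :: "real^'m"
      have "\<bar>z $ i\<bar> * \<bar>z $ j\<bar> \<le> norm z * norm z"
        using component_le_norm_cart[of z i] component_le_norm_cart[of z j] by (intro mult_mono) auto
      then have "\<bar>z $ i\<bar> * \<bar>z $ j\<bar> * f0 z \<le> (norm z)^2 * f0 z"
        using nn[of z] by (simp add: power2_eq_square mult_right_mono)
      then show "norm (z $ i * z $ j * f0 z) \<le> norm ((norm z)^2 * f0 z)"
        using nn[of z] by (simp add: abs_mult)
    qed
  qed
  show "integrable lebesgue (\<lambda>z. f0 z *\<^sub>R z)"
  proof (rule Bochner_Integration.integrable_bound[OF b])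
    show "(\<lambda>z. f0 z *\<^sub>R z) \<in> borel_measurable lebesgue"
      by (intro borel_measurable_scaleR fm cont_meas_lebesgue continuous_intros)
    show "AE z in lebesgue. norm (f0 z *\<^sub>R z) \<le> norm (f0 z + (norm z)^2 * f0 z)"
    proof (rule AE_I2)
      fix z :: "real^'m"
      have "norm z * f0 z \<le> (1 + (norm z)^2) * f0 z"
        using n1[of z] nn[of z] by (intro mult_right_mono) auto
      then show "norm (f0 z *\<^sub>R z) \<le> norm (f0 z + (norm z)^2 * f0 z)"
        using nn[of z] by (simp add: algebra_simps)
    qed
  qed
qed


lemma dot_transpose2: "((M::real^'n^'n) *v y) \<bullet> z = y \<bullet> (transpose M *v z)"
  using dot_transpose[of z M y] by (simp add: inner_commute)

theorem mainTheorem2: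
  fixes n :: nat
    and V :: "real^'m^'m" and d :: "real^'m" and V0 :: real
    and f0 :: "real^'m \<Rightarrow> real"
  assumes dim: "CARD('m) = 2 * n" and n1: "n \<ge> 1"
    and Vsym: "transpose V = V"
    and Vpos: "\<forall>x. x \<noteq> 0 \<longrightarrow> x \<bullet> (V *v x) > 0"
    and f0_meas: "f0 \<in> borel_measurable lebesgue"
    and f0_nonneg: "\<forall>z. f0 z \<ge> 0"
    and f0_nz: "\<not> (AE z in lebesgue. f0 z = 0)"
    and f0_int: "integrable lebesgue f0"
    and f0_mom2: "integrable lebesgue (\<lambda>z. (norm z)^2 * f0 z)"
  shows
    "(let \<E> = (\<lambda>z. V0 + (z - d) \<bullet> (V *v (z - d)));
          N = integral\<^sup>L lebesgue f0;
          c = (1 / N) *\<^sub>R integral\<^sup>L lebesgue (\<lambda>z. f0 z *\<^sub>R z);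
          H = (\<chi> i j. integral\<^sup>L lebesgue (\<lambda>z. (z $ i * z $ j) * f0 (z + c)))
      in Inf {integral\<^sup>L lebesgue (\<lambda>z. \<E> z * f0 (matrix_inv A *v z + b)) | b A.
                 det A = 1}
         = N * V0 + real (2 * n) * det (V ** H) powr (1 / real (2 * n)))"
proof -
  define E where "E = (\<lambda>z. V0 + (z - d) \<bullet> (V *v (z - d)))"
  define N where "N = integral\<^sup>L lebesgue f0"
  define c where "c = (1 / N) *\<^sub>R integral\<^sup>L lebesgue (\<lambda>z. f0 z *\<^sub>R z)"
  define H where "H = (\<chi> i j. integral\<^sup>L lebesgue (\<lambda>z. (z $ i * z $ j) * f0 (z + c)))"
  have nn: "\<And>z. f0 z \<ge> 0" using f0_nonneg by blast
  note mom = moments[OF f0_meas nn f0_int f0_mom2]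
  have Npos: "N > 0"
  proof -
    have "N \<ge> 0" unfolding N_def by (rule integral_nonneg_AE) (simp add: nn)
    moreover have "N \<noteq> 0"
    proof
      assume "N = 0"
      then have "AE z in lebesgue. f0 z = 0"
        using integral_nonneg_eq_0_iff_AE[OF f0_int] nn N_def by simp
      with f0_nz show False by blast
    qed
    ultimately show ?thesis by simp
  qed
  have cN: "N * c $ j = integral\<^sup>L lebesgue (\<lambda>z. z $ j * f0 z)" for j
  proof -
    have "(integral\<^sup>L lebesgue (\<lambda>z. f0 z *\<^sub>R z)) $ j = integral\<^sup>L lebesgue (\<lambda>z. (f0 z *\<^sub>R z) $ j)"
      using integral_bounded_linear[OF bounded_linear_vec_nth[of j] mom(3)] by simp
    then show ?thesis using Npos by (simp add: c_def mult.commute)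
  qed
  define k where "k = (\<lambda>i j z. (z $ i - c $ i) * (z $ j - c $ j) * f0 z)"
  define l where "l = (\<lambda>j z. (z $ j - c $ j) * f0 z)"
  have kint: "integrable lebesgue (k i j)" for i j
  proof -
    have eq: "k i j = (\<lambda>z. z$i * z$j * f0 z - c$j * (z$i * f0 z) - c$i * (z$j * f0 z) + (c$i * c$j) * f0 z)"
      by (auto simp: k_def algebra_simps fun_eq_iff)
    show ?thesis unfolding eq using mom(1,2) f0_int by simp
  qed
  have lint: "integrable lebesgue (l j)" for j
  proof -
    have eq: "l j = (\<lambda>z. z$j * f0 z - c$j * f0 z)"
      by (auto simp: l_def algebra_simps fun_eq_iff)
    show ?thesis unfolding eq using mom(1) f0_int by simp
  qed
  have l0: "integral\<^sup>L lebesgue (l j) = 0" for j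
  proof -
    have eq: "l j = (\<lambda>z. z$j * f0 z - c$j * f0 z)"
      by (auto simp: l_def algebra_simps fun_eq_iff)
    show ?thesis unfolding eq using mom(1) f0_int cN[of j] by (simp add: N_def[symmetric] mult.commute)
  qed
  have kmeas: "k i j \<in> borel_measurable lebesgue" for i j using kint by (rule borel_measurable_integrable)
  have Hk: "H $ i $ j = integral\<^sup>L lebesgue (k i j)" for i j
  proof -
    have "integral\<^sup>L lebesgue (\<lambda>u. k i j (mat 1 *v u + c)) = integral\<^sup>L lebesgue (k i j)"
      by (rule affine_integral(1)) (simp_all add: kmeas)
    moreover have "(\<lambda>u. k i j (mat 1 *v u + c)) = (\<lambda>z. (z $ i * z $ j) * f0 (z + c))"
      by (simp add: k_def fun_eq_iff)
    ultimately show ?thesis by (simp add: H_def)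
  qed
  have Hsym: "transpose H = H"
    by (simp add: H_def transpose_def vec_eq_iff mult.commute)
  have Hpd: "\<forall>x. x \<noteq> 0 \<longrightarrow> x \<bullet> (H *v x) > 0"
  proof (intro allI impI)
    fix x :: "real^'m" assume x0: "x \<noteq> 0"
    define q where "q = (\<lambda>z. (x \<bullet> (z - c))^2 * f0 z)"
    have qeq: "q = (\<lambda>z. \<Sum>i\<in>UNIV. \<Sum>j\<in>UNIV. (x$i * x$j) * k i j z)"
    proof
      fix z :: "real^'m"
      have "q z = (\<Sum>i\<in>UNIV. x$i * (z$i - c$i)) * (\<Sum>j\<in>UNIV. x$j * (z$j - c$j)) * f0 z"
        by (simp add: q_def inner_vec_def power2_eq_square)
      also have "\<dots> = (\<Sum>i\<in>UNIV. \<Sum>j\<in>UNIV. (x$i * (z$i - c$i)) * (x$j * (z$j - c$j))) * f0 z"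
        by (simp add: sum_product)
      also have "\<dots> = (\<Sum>i\<in>UNIV. \<Sum>j\<in>UNIV. (x$i * x$j) * k i j z)"
        by (simp add: sum_distrib_right sum_distrib_left k_def mult_ac)
      finally show "q z = (\<Sum>i\<in>UNIV. \<Sum>j\<in>UNIV. (x$i * x$j) * k i j z)" .
    qed
    have qint: "integrable lebesgue q" unfolding qeq using kint by simp
    have "x \<bullet> (H *v x) = (\<Sum>i\<in>UNIV. \<Sum>j\<in>UNIV. (x$i * x$j) * H$i$j)"
      by (simp add: inner_vec_def matrix_vector_mult_def sum_distrib_left mult_ac)
    also have "\<dots> = integral\<^sup>L lebesgue q"
      unfolding qeq using kint by (simp add: Hk)
    finally have xHx: "x \<bullet> (H *v x) = integral\<^sup>L lebesgue q" .
    have qnn: "AE z in lebesgue. 0 \<le> q z" by (simp add: q_def nn)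
    have "integral\<^sup>L lebesgue q \<ge> 0" using qnn by (rule integral_nonneg_AE)
    moreover have "integral\<^sup>L lebesgue q \<noteq> 0"
    proof
      assume "integral\<^sup>L lebesgue q = 0"
      then have a1: "AE z in lebesgue. q z = 0" using integral_nonneg_eq_0_iff_AE[OF qint qnn] by simp
      have "negligible {z. x \<bullet> z = x \<bullet> c}" using x0 by (intro negligible_hyperplane) simp
      then have "{z. x \<bullet> z = x \<bullet> c} \<in> null_sets lebesgue" by (simp add: negligible_iff_null_sets)
      then have a2: "AE z in lebesgue. z \<notin> {z. x \<bullet> z = x \<bullet> c}" by (rule AE_not_in)
      from a1 a2 have "AE z in lebesgue. f0 z = 0"
        by eventually_elim (auto simp: q_def inner_diff_right)
      with f0_nz show False by blast
    qed
    ultimately show "x \<bullet> (H *v x) > 0" using xHx by simp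
  qed
  have Iform: "integral\<^sup>L lebesgue (\<lambda>z. E z * f0 (matrix_inv A *v z + b))
      = N * V0 + trace (transpose A ** V ** A ** H) + N * ((A *v (c - b) - d) \<bullet> (V *v (A *v (c - b) - d)))"
    if dA: "det A = 1" for A b
  proof -
    define B where "B = matrix_inv A"
    have BA: "B ** A = mat 1" using matrix_inv_props[of A] dA by (simp add: B_def)
    have "det B * det A = 1" using arg_cong[OF BA, of det] by (simp add: det_mul)
    then have dB: "\<bar>det B\<bar> = 1" using dA by simp
    define F where "F = (\<lambda>z. E z * f0 (B *v z + b))"
    have Em: "E \<in> borel_measurable lebesgue"
      unfolding E_def by (intro cont_meas_lebesgue continuous_intros)
    have fBm: "(\<lambda>z. f0 (B *v z + b)) \<in> borel_measurable lebesgue"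
      using measurable_compose[OF affine_distr(1)[OF dB, of b] f0_meas] by (simp add: o_def)
    have Fm: "F \<in> borel_measurable lebesgue"
      unfolding F_def using Em fBm by (rule borel_measurable_times)
    have dA': "\<bar>det A\<bar> = 1" using dA by simp
    have "integral\<^sup>L lebesgue F = integral\<^sup>L lebesgue (\<lambda>u. F (A *v u + - (A *v b)))"
      using affine_integral(1)[OF dA' Fm, of "- (A *v b)"] by simp
    also have "\<dots> = integral\<^sup>L lebesgue (\<lambda>u. E (A *v (u - b)) * f0 u)"
    proof -
      have "B *v (A *v u + - (A *v b)) + b = u" for u
      proof -
        have "B *v (A *v u + - (A *v b)) = B *v (A *v u) - B *v (A *v b)"
          by (simp add: matrix_vector_mult_diff_distrib[symmetric])
        also have "\<dots> = u - b" by (simp add: matrix_vector_mul_assoc BA)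
        finally show ?thesis by simp
      qed
      moreover have "A *v u + - (A *v b) = A *v (u - b)" for u
        by (simp add: matrix_vector_mult_diff_distrib)
      ultimately show ?thesis by (simp add: F_def)
    qed
    also have "\<dots> = N * V0 + trace (transpose A ** V ** A ** H) + N * ((A *v (c - b) - d) \<bullet> (V *v (A *v (c - b) - d)))"
    proof -
      define M where "M = transpose A ** V ** A"
      define e where "e = A *v (c - b) - d"
      define w where "w = transpose A *v (V *v e)"
      define K where "K = e \<bullet> (V *v e)"
      have pw: "E (A *v (u - b)) * f0 u = V0 * f0 u + (\<Sum>i\<in>UNIV. \<Sum>j\<in>UNIV. M$i$j * k i j u)
                 + 2 * (\<Sum>j\<in>UNIV. w$j * l j u) + K * f0 u" for u
      proof -
        define y where "y = u - c"
        have "A *v (u - b) - d = A *v y + e"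
          by (simp add: y_def e_def matrix_vector_mult_diff_distrib algebra_simps)
        then have "E (A *v (u - b)) = V0 + (A *v y + e) \<bullet> (V *v (A *v y + e))"
          by (simp add: E_def)
        also have "(A *v y + e) \<bullet> (V *v (A *v y + e)) = y \<bullet> (M *v y) + 2 * (w \<bullet> y) + K"
        proof -
          have "(A *v y + e) \<bullet> (V *v (A *v y + e)) = (A *v y) \<bullet> (V *v (A *v y)) + (A *v y) \<bullet> (V *v e)
              + e \<bullet> (V *v (A *v y)) + e \<bullet> (V *v e)"
            by (simp add: matrix_vector_right_distrib inner_add_left inner_add_right)
          moreover have "(A *v y) \<bullet> (V *v (A *v y)) = y \<bullet> (M *v y)"
            by (simp add: dot_transpose2 M_def matrix_vector_mul_assoc matrix_mul_assoc)
          moreover have "(A *v y) \<bullet> (V *v e) = w \<bullet> y"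
            by (simp add: dot_transpose2 w_def inner_commute)
          moreover have "e \<bullet> (V *v (A *v y)) = w \<bullet> y"
            using sym_dot[OF Vsym, of e "A *v y"] by (simp add: dot_transpose2 w_def inner_commute)
          ultimately show ?thesis by (simp add: K_def)
        qed
        finally have Eeq: "E (A *v (u - b)) = V0 + y \<bullet> (M *v y) + 2 * (w \<bullet> y) + K" by simp
        have q1: "y \<bullet> (M *v y) = (\<Sum>i\<in>UNIV. \<Sum>j\<in>UNIV. M$i$j * (y$i * y$j))"
          by (simp add: inner_vec_def matrix_vector_mult_def sum_distrib_left mult_ac)
        have q2: "w \<bullet> y = (\<Sum>j\<in>UNIV. w$j * y$j)" by (simp add: inner_vec_def)
        show ?thesis unfolding Eeq q1 q2
          by (simp add: k_def l_def y_def algebra_simps sum_distrib_left sum_distrib_right)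
      qed
      have "integral\<^sup>L lebesgue (\<lambda>u. E (A *v (u - b)) * f0 u)
          = integral\<^sup>L lebesgue (\<lambda>u. V0 * f0 u + (\<Sum>i\<in>UNIV. \<Sum>j\<in>UNIV. M$i$j * k i j u)
                 + 2 * (\<Sum>j\<in>UNIV. w$j * l j u) + K * f0 u)"
        by (simp only: pw)
      also have "\<dots> = V0 * N + (\<Sum>i\<in>UNIV. \<Sum>j\<in>UNIV. M$i$j * H$i$j) + 2 * (\<Sum>j\<in>UNIV. w$j * 0) + K * N"
        using kint lint f0_int by (simp add: Hk l0 N_def)
      also have "(\<Sum>i\<in>UNIV. \<Sum>j\<in>UNIV. M$i$j * H$i$j) = trace (M ** H)"
      proof -
        have "H $ j $ i = H $ i $ j" for i j using Hsym by (metis transpose_def vec_lambda_beta)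
        then show ?thesis by (simp add: trace_def matrix_matrix_mult_def)
      qed
      finally show ?thesis by (simp add: M_def K_def e_def mult.commute)
    qed
    finally show ?thesis by (simp add: F_def B_def)
  qed
  have main: "Inf {integral\<^sup>L lebesgue (\<lambda>z. E z * f0 (matrix_inv A *v z + b)) | b A. det A = 1}
      = N * V0 + real (2 * n) * det (V ** H) powr (1 / real (2 * n))"
  proof (rule cInf_eq_minimum)
    have cm: "real CARD('m) = real (2 * n)" using dim by simp
    have dVH: "det (V ** H) = det V * det H" by (simp add: det_mul)
    have Vpsd: "\<forall>x. x \<bullet> (V *v x) \<ge> 0"
    proof
      fix x :: "real^'m" show "x \<bullet> (V *v x) \<ge> 0" using Vpos by (cases "x = 0") (auto intro: less_imp_le)
    qed
    have Hpsd: "\<forall>x. x \<bullet> (H *v x) \<ge> 0"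
    proof
      fix x :: "real^'m" show "x \<bullet> (H *v x) \<ge> 0" using Hpd by (cases "x = 0") (auto intro: less_imp_le)
    qed
    obtain A :: "real^'m^'m" where dA: "det A = 1"
      and trA: "trace (transpose A ** V ** A ** H) = real CARD('m) * (det V * det H) powr (1 / real CARD('m))"
      using trace_att[OF Vsym Vpos Hsym Hpd] by blast
    define b where "b = c - matrix_inv A *v d"
    have AAi: "A ** matrix_inv A = mat 1" using matrix_inv_props[of A] dA by simp
    have e0: "A *v (c - b) - d = 0"
      by (simp add: b_def matrix_vector_mul_assoc AAi)
    have "integral\<^sup>L lebesgue (\<lambda>z. E z * f0 (matrix_inv A *v z + b))
        = N * V0 + real (2 * n) * det (V ** H) powr (1 / real (2 * n))"
      using Iform[OF dA, of b] e0 trA cm dVH by simp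
    then show "N * V0 + real (2 * n) * det (V ** H) powr (1 / real (2 * n))
        \<in> {integral\<^sup>L lebesgue (\<lambda>z. E z * f0 (matrix_inv A *v z + b)) | b A. det A = 1}"
      using dA by (metis (mono_tags, lifting) mem_Collect_eq)
  next
    fix x assume "x \<in> {integral\<^sup>L lebesgue (\<lambda>z. E z * f0 (matrix_inv A *v z + b)) | b A. det A = 1}"
    then obtain A :: "real^'m^'m" and b where dA: "det A = 1"
      and x: "x = integral\<^sup>L lebesgue (\<lambda>z. E z * f0 (matrix_inv A *v z + b))" by blast
    have cm: "real CARD('m) = real (2 * n)" using dim by simp
    have dVH: "det (V ** H) = det V * det H" by (simp add: det_mul)
    have Vpsd: "\<forall>x. x \<bullet> (V *v x) \<ge> 0"
    proof
      fix x :: "real^'m" show "x \<bullet> (V *v x) \<ge> 0" using Vpos by (cases "x = 0") (auto intro: less_imp_le)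
    qed
    have Hpsd: "\<forall>x. x \<bullet> (H *v x) \<ge> 0"
    proof
      fix x :: "real^'m" show "x \<bullet> (H *v x) \<ge> 0" using Hpd by (cases "x = 0") (auto intro: less_imp_le)
    qed
    have lb: "real CARD('m) * (det V * det H) powr (1 / real CARD('m)) \<le> trace (transpose A ** V ** A ** H)"
      by (rule trace_lb[OF Vsym Vpsd Hsym Hpsd dA])
    have K0: "0 \<le> N * ((A *v (c - b) - d) \<bullet> (V *v (A *v (c - b) - d)))"
      using Npos Vpsd by simp
    show "N * V0 + real (2 * n) * det (V ** H) powr (1 / real (2 * n)) \<le> x"
      unfolding x Iform[OF dA, of b] using lb K0 cm dVH by simp
  qed
  then show ?thesis unfolding Let_def E_def N_def c_def H_def by simp
qed


end
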